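(* Let $\gamma_*\in(0,1]$ and $\zeta_*\in(0,1]$. Define for $t\in\mathbb{R}$ \[ \tilde f(t)=\frac{1}{\sqrt{2\pi}}\int_{-\infty}^t\Big[(1-\tfrac12\zeta_* )e^{-x^2/2}+\tfrac12\zeta_*e^{-(x-2\gamma_* )^2/2}-(1-\zeta_* )e^{-x^2/2}-\zeta_*e^{-(x-\gamma_* )^2/2}\Big]dx, \] and $f(t)=|\tilde f(t)|$. Let \[ t_+=\tfrac32\gamma_*+\tfrac{1}{\gamma_*}\log\left(1-\sqrt{1-e^{-\gamma_*^2}}\right),\qquad t_-=\tfrac32\gamma_*+\tfrac{1}{\gamma_*}\log\left(1+\sqrt{1-e^{-\gamma_*^2}}\right). \] Then the set of maximizers of $f$ over $\mathbb{R}$ is exactly $\{t_+,t_-\}$, and $\tilde f(t_+)>0$, $\tilde f(t_-)<0$. *)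

theory Defs
  imports "HOL-Analysis.Analysis"
begin

definition lemma6_integrand :: "real \<Rightarrow> real \<Rightarrow> real \<Rightarrow> real" where
  "lemma6_integrand \<gamma> \<zeta> x =
     (1 - \<zeta> / 2) * exp (- (x\<^sup>2) / 2) + (\<zeta> / 2) * exp (- ((x - 2 * \<gamma>)\<^sup>2) / 2)
     - (1 - \<zeta>) * exp (- (x\<^sup>2) / 2) - \<zeta> * exp (- ((x - \<gamma>)\<^sup>2) / 2)"

definition lemma6_ftilde :: "real \<Rightarrow> real \<Rightarrow> real \<Rightarrow> real" where
  "lemma6_ftilde \<gamma> \<zeta> t =
     (1 / sqrt (2 * pi)) * (LBINT x:{..t}. lemma6_integrand \<gamma> \<zeta> x)"

definition lemma6_f :: "real \<Rightarrow> real \<Rightarrow> real \<Rightarrow> real" where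
  "lemma6_f \<gamma> \<zeta> t = \<bar>lemma6_ftilde \<gamma> \<zeta> t\<bar>"

definition lemma6_tplus :: "real \<Rightarrow> real" where
  "lemma6_tplus \<gamma> = 3/2 * \<gamma> + (1 / \<gamma>) * ln (1 - sqrt (1 - exp (- (\<gamma>\<^sup>2))))"

definition lemma6_tminus :: "real \<Rightarrow> real" where
  "lemma6_tminus \<gamma> = 3/2 * \<gamma> + (1 / \<gamma>) * ln (1 + sqrt (1 - exp (- (\<gamma>\<^sup>2))))"

end

theory Submission imports Defs "HOL-Probability.Distributions" begin

lemma g_alt: "lemma6_integrand \<gamma> \<zeta> x = \<zeta>/2 * (exp (-(x\<^sup>2)/2) + exp (-((x - 2*\<gamma>)\<^sup>2)/2) - 2 * exp (-((x - \<gamma>)\<^sup>2)/2))"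
  by (simp add: lemma6_integrand_def algebra_simps)

lemma g_nd: "lemma6_integrand \<gamma> \<zeta> x = \<zeta>/2 * sqrt (2*pi) * (normal_density 0 1 x + normal_density (2*\<gamma>) 1 x - 2 * normal_density \<gamma> 1 x)"
  unfolding g_alt normal_density_def by (simp add: algebra_simps)

lemma g_int: "integrable lborel (lemma6_integrand \<gamma> \<zeta>)"
  unfolding g_nd[abs_def] by (intro integrable_mult_right integrable_diff integrable_add) auto

lemma g_total: "integral\<^sup>L lborel (lemma6_integrand \<gamma> \<zeta>) = 0"
  unfolding g_nd[abs_def]
proof -
  have i1: "integrable lborel (\<lambda>x. normal_density 0 1 x + normal_density (2*\<gamma>) 1 x)" by auto
  have i2: "integrable lborel (\<lambda>x. 2 * normal_density \<gamma> 1 x)" by auto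
  have "(LBINT x. normal_density 0 1 x + normal_density (2*\<gamma>) 1 x - 2 * normal_density \<gamma> 1 x) = 0"
    by (simp add: Bochner_Integration.integral_diff[OF i1 i2] Bochner_Integration.integral_add)
  then show "(LBINT x. \<zeta>/2 * sqrt (2*pi) * (normal_density 0 1 x + normal_density (2*\<gamma>) 1 x - 2 * normal_density \<gamma> 1 x)) = 0"
    by simp
qed

lemma g_sym: "lemma6_integrand \<gamma> \<zeta> (2*\<gamma> - x) = lemma6_integrand \<gamma> \<zeta> x"
proof -
  have "(2*\<gamma> - x)\<^sup>2 = (x - 2*\<gamma>)\<^sup>2" "(2*\<gamma> - x - 2*\<gamma>)\<^sup>2 = x\<^sup>2" "(2*\<gamma> - x - \<gamma>)\<^sup>2 = (x - \<gamma>)\<^sup>2"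
    by (simp_all add: power2_eq_square algebra_simps)
  then show ?thesis unfolding g_alt by simp
qed

lemma F_split:
  assumes "a \<le> u"
  shows "(LBINT x:{..u}. lemma6_integrand \<gamma> \<zeta> x) = (LBINT x:{..a}. lemma6_integrand \<gamma> \<zeta> x) + (LBINT x=a..u. lemma6_integrand \<gamma> \<zeta> x)"
proof -
  have si: "set_integrable lborel A (lemma6_integrand \<gamma> \<zeta>)" if "A \<in> sets lborel" for A
    unfolding set_integrable_def using that g_int by (intro integrable_mult_indicator) auto
  have "{..u} = {..a} \<union> {a<..u}" using assms by auto
  then have "(LBINT x:{..u}. lemma6_integrand \<gamma> \<zeta> x) = (LBINT x:{..a}. lemma6_integrand \<gamma> \<zeta> x) + (LBINT x:{a<..u}. lemma6_integrand \<gamma> \<zeta> x)"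
  proof -
    have d: "{..a} \<inter> {a<..u} = {}" by auto
    have s1: "set_integrable lborel {..a} (lemma6_integrand \<gamma> \<zeta>)" by (rule si) simp
    have s2: "set_integrable lborel {a<..u} (lemma6_integrand \<gamma> \<zeta>)" by (rule si) simp
    show ?thesis using set_integral_Un[OF d s1 s2] \<open>{..u} = {..a} \<union> {a<..u}\<close> by simp
  qed
  then show ?thesis using assms by (simp add: interval_integral_Ioc)
qed

lemma g_cont: "continuous_on A (lemma6_integrand \<gamma> \<zeta>)"
  unfolding lemma6_integrand_def by (intro continuous_intros) auto

lemma F_deriv: "((\<lambda>t. LBINT x:{..t}. lemma6_integrand \<gamma> \<zeta> x) has_real_derivative lemma6_integrand \<gamma> \<zeta> t) (at t)"
proof -
  let ?g = "lemma6_integrand \<gamma> \<zeta>"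
  have "((\<lambda>u. LBINT y=(t-1)..u. ?g y) has_vector_derivative ?g t) (at t within {t-1..t+1})"
    by (rule interval_integral_FTC2) (auto intro: g_cont)
  then have "((\<lambda>u. LBINT y=(t-1)..u. ?g y) has_vector_derivative ?g t) (at t within {t-1<..<t+1})"
    by (rule has_vector_derivative_within_subset) auto
  then have "((\<lambda>u. LBINT y=(t-1)..u. ?g y) has_vector_derivative ?g t) (at t)"
    by (subst (asm) has_vector_derivative_within_open) auto
  then have "((\<lambda>u. (LBINT x:{..t-1}. ?g x) + (LBINT y=(t-1)..u. ?g y)) has_vector_derivative ?g t) (at t)"
    by (auto intro!: derivative_eq_intros)
  then have "((\<lambda>u. (LBINT x:{..t-1}. ?g x) + (LBINT y=(t-1)..u. ?g y)) has_real_derivative ?g t) (at t)"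
    by (simp add: has_real_derivative_iff_has_vector_derivative)
  then show ?thesis
  proof (rule has_field_derivative_transform_within_open[where S="{t-1<..<t+1}"])
    fix u assume "u \<in> {t-1<..<t+1}"
    then show "(LBINT x:{..t-1}. ?g x) + (LBINT y=(t-1)..u. ?g y) = (LBINT x:{..u}. ?g x)"
      using F_split[of "t-1" u] by simp
  qed auto
qed

lemma F_sym: "(LBINT x:{..t}. lemma6_integrand \<gamma> \<zeta> x) + (LBINT x:{..2*\<gamma>-t}. lemma6_integrand \<gamma> \<zeta> x) = 0"
proof -
  let ?g = "lemma6_integrand \<gamma> \<zeta>"
  have ii: "integrable lborel (\<lambda>x. indicator A x * ?g x)" if "A \<in> sets lborel" for A
    using integrable_mult_indicator[OF that g_int] by simp
  have "(LBINT x:{..2*\<gamma>-t}. ?g x) = (LBINT x. indicator {..2*\<gamma>-t} x * ?g x)"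
    by (simp add: set_lebesgue_integral_def)
  also have "\<dots> = (LBINT x. indicator {..2*\<gamma>-t} (2*\<gamma> + (-1) * x) * ?g (2*\<gamma> + (-1) * x))"
    using lborel_integral_real_affine[where c="-1" and t="2*\<gamma>" and f="\<lambda>x. indicator {..2*\<gamma>-t} x * ?g x"] by simp
  also have "\<dots> = (LBINT x. indicator {t..} x * ?g x)"
    using g_sym[of \<gamma> \<zeta>] by (intro Bochner_Integration.integral_cong) (auto split: split_indicator)
  finally have 1: "(LBINT x:{..2*\<gamma>-t}. ?g x) = (LBINT x. indicator {t..} x * ?g x)" .
  have "(LBINT x:{..t}. ?g x) + (LBINT x. indicator {t..} x * ?g x)
       = (LBINT x. indicator {..t} x * ?g x + indicator {t..} x * ?g x)"
    by (simp add: set_lebesgue_integral_def Bochner_Integration.integral_add[OF ii ii])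
  also have "\<dots> = (LBINT x. ?g x)"
    using AE_lborel_singleton[of t] borel_measurable_integrable[OF g_int]
      borel_measurable_integrable[OF Bochner_Integration.integrable_add[OF ii[of "{..t}"] ii[of "{t..}"]]]
    by (intro integral_cong_AE) (auto elim!: eventually_mono split: split_indicator)
  also have "\<dots> = 0" using g_total .
  finally show ?thesis using 1 by simp
qed


lemma g_factor:
  fixes \<gamma> \<zeta> t :: real
  defines "y \<equiv> exp (\<gamma>*t - 3/2*\<gamma>\<^sup>2)" and "s \<equiv> sqrt (1 - exp (-(\<gamma>\<^sup>2)))"
  assumes "exp (-(\<gamma>\<^sup>2)) \<le> 1"
  shows "lemma6_integrand \<gamma> \<zeta> t = \<zeta>/2 * exp (-((t-\<gamma>)\<^sup>2)/2) * exp (-(\<gamma>*t - 3/2*\<gamma>\<^sup>2)) * ((y - (1 - s)) * (y - (1 + s)))"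
proof -
  define E where "E = exp (-((t-\<gamma>)\<^sup>2)/2)"
  define Z where "Z = exp (-(\<gamma>*t - 3/2*\<gamma>\<^sup>2))"
  have yz: "y * Z = 1" unfolding y_def Z_def by (simp add: exp_minus field_simps)
  have a1: "-((t-2*\<gamma>)\<^sup>2)/2 = -((t-\<gamma>)\<^sup>2)/2 + (\<gamma>*t - 3/2*\<gamma>\<^sup>2)"
    by (simp add: power2_eq_square field_simps)
  have e1: "exp (-((t-2*\<gamma>)\<^sup>2)/2) = E * y" unfolding E_def y_def by (subst a1, subst exp_add, rule refl)
  have a2: "-(t\<^sup>2)/2 = -((t-\<gamma>)\<^sup>2)/2 + (-(\<gamma>\<^sup>2)) + (-(\<gamma>*t - 3/2*\<gamma>\<^sup>2))"
    by (simp add: power2_eq_square field_simps)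
  have e2: "exp (-(t\<^sup>2)/2) = E * exp (-(\<gamma>\<^sup>2)) * Z" unfolding E_def Z_def by (subst a2, subst exp_add, subst exp_add, rule refl)
  have ss: "s * s = 1 - exp (-(\<gamma>\<^sup>2))" unfolding s_def using assms(3) by simp
  have q: "(y - (1 - s)) * (y - (1 + s)) = y*y - 2*y + exp (-(\<gamma>\<^sup>2))"
    using ss by (simp add: algebra_simps)
  have "E * Z * ((y - (1 - s)) * (y - (1 + s))) = (E*y)*(y*Z) - 2*E*(y*Z) + E * exp (-(\<gamma>\<^sup>2)) * Z"
    by (subst q) (simp add: algebra_simps)
  also have "\<dots> = exp (-((t-2*\<gamma>)\<^sup>2)/2) - 2*E + exp (-(t\<^sup>2)/2)" using yz e1 e2 by simp
  finally have fin: "E * Z * ((y - (1 - s)) * (y - (1 + s))) = exp (-((t-2*\<gamma>)\<^sup>2)/2) - 2*E + exp (-(t\<^sup>2)/2)" .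
  have "\<zeta>/2 * E * Z * ((y - (1 - s)) * (y - (1 + s))) = \<zeta>/2 * (E * Z * ((y - (1 - s)) * (y - (1 + s))))"
    by (simp add: mult.assoc)
  also have "\<dots> = lemma6_integrand \<gamma> \<zeta> t" by (subst fin) (simp add: g_alt E_def algebra_simps)
  finally show ?thesis unfolding E_def Z_def by simp
qed


lemma lt_iff:
  fixes \<gamma> t a :: real assumes "\<gamma> > 0" "a > 0"
  shows "t < 3/2*\<gamma> + 1/\<gamma> * ln a \<longleftrightarrow> exp (\<gamma>*t - 3/2*\<gamma>\<^sup>2) < a"
proof -
  have "t < 3/2*\<gamma> + 1/\<gamma> * ln a \<longleftrightarrow> \<gamma>*t - 3/2*\<gamma>\<^sup>2 < ln a"
    using assms by (simp add: field_simps power2_eq_square)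
  also have "\<dots> \<longleftrightarrow> exp (\<gamma>*t - 3/2*\<gamma>\<^sup>2) < a"
    using assms by (metis exp_less_cancel_iff exp_ln)
  finally show ?thesis .
qed

lemma gt_iff:
  fixes \<gamma> t a :: real assumes "\<gamma> > 0" "a > 0"
  shows "t > 3/2*\<gamma> + 1/\<gamma> * ln a \<longleftrightarrow> exp (\<gamma>*t - 3/2*\<gamma>\<^sup>2) > a"
proof -
  have "t > 3/2*\<gamma> + 1/\<gamma> * ln a \<longleftrightarrow> \<gamma>*t - 3/2*\<gamma>\<^sup>2 > ln a"
    using assms by (simp add: field_simps power2_eq_square)
  also have "\<dots> \<longleftrightarrow> exp (\<gamma>*t - 3/2*\<gamma>\<^sup>2) > a"
    using assms by (metis exp_less_cancel_iff exp_ln)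
  finally show ?thesis .
qed

lemma basics:
  fixes \<gamma> :: real assumes "\<gamma> > 0"
  shows "0 < sqrt (1 - exp (-(\<gamma>\<^sup>2)))" "sqrt (1 - exp (-(\<gamma>\<^sup>2))) < 1" "exp (-(\<gamma>\<^sup>2)) \<le> 1"
    "lemma6_tplus \<gamma> < lemma6_tminus \<gamma>" "lemma6_tplus \<gamma> + lemma6_tminus \<gamma> = 2*\<gamma>"
proof -
  let ?c = "exp (-(\<gamma>\<^sup>2))" let ?s = "sqrt (1 - ?c)"
  have c1: "?c < 1" using assms by simp
  have c0: "?c > 0" by simp
  show s0: "0 < ?s" using c1 by simp
  show s1: "?s < 1" using c0 by simp
  show "?c \<le> 1" using c1 by simp
  have h: "ln (1 - ?s) < ln (1 + ?s)" using s0 s1 by (intro ln_less_cancel_iff[THEN iffD2]) linarith+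
  have "1/\<gamma> * ln (1 - ?s) < 1/\<gamma> * ln (1 + ?s)" by (rule mult_strict_left_mono[OF h]) (use assms in simp)
  then show "lemma6_tplus \<gamma> < lemma6_tminus \<gamma>" unfolding lemma6_tplus_def lemma6_tminus_def
    by linarith
  have "ln (1 - ?s) + ln (1 + ?s) = ln ((1 - ?s) * (1 + ?s))" using s0 s1 by (intro ln_mult_pos[symmetric]) linarith+
  also have "(1 - ?s) * (1 + ?s) = 1 - ?s * ?s" by (simp add: algebra_simps)
  also have "\<dots> = ?c" using c1 by simp
  finally have e: "ln (1 - ?s) + ln (1 + ?s) = -(\<gamma>\<^sup>2)" by simp
  have "1/\<gamma> * ln (1 - ?s) + 1/\<gamma> * ln (1 + ?s) = 1/\<gamma> * (ln (1 - ?s) + ln (1 + ?s))"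
    by (simp add: distrib_left)
  also have "\<dots> = -\<gamma>" unfolding e using assms by (simp add: power2_eq_square)
  finally show "lemma6_tplus \<gamma> + lemma6_tminus \<gamma> = 2*\<gamma>" unfolding lemma6_tplus_def lemma6_tminus_def
    by linarith
qed

lemma g_sign:
  fixes \<gamma> \<zeta> t :: real assumes "\<gamma> > 0" "\<zeta> > 0"
  shows "t < lemma6_tplus \<gamma> \<or> t > lemma6_tminus \<gamma> \<Longrightarrow> lemma6_integrand \<gamma> \<zeta> t > 0"
    and "t \<le> lemma6_tplus \<gamma> \<Longrightarrow> lemma6_integrand \<gamma> \<zeta> t \<ge> 0"
    and "lemma6_tplus \<gamma> < t \<Longrightarrow> t < lemma6_tminus \<gamma> \<Longrightarrow> lemma6_integrand \<gamma> \<zeta> t < 0"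
proof -
  define y where "y = exp (\<gamma>*t - 3/2*\<gamma>\<^sup>2)"
  define s where "s = sqrt (1 - exp (-(\<gamma>\<^sup>2)))"
  note b = basics[OF assms(1), folded s_def]
  have pos: "\<zeta>/2 * exp (-((t-\<gamma>)\<^sup>2)/2) * exp (-(\<gamma>*t - 3/2*\<gamma>\<^sup>2)) > 0" using assms by simp
  have fac: "lemma6_integrand \<gamma> \<zeta> t = \<zeta>/2 * exp (-((t-\<gamma>)\<^sup>2)/2) * exp (-(\<gamma>*t - 3/2*\<gamma>\<^sup>2)) * ((y - (1 - s)) * (y - (1 + s)))"
    unfolding y_def s_def by (rule g_factor) (use b in simp)
  have p1: "1 - s > 0" "1 + s > 0" using b by auto
  have dp: "lemma6_tplus \<gamma> = 3/2*\<gamma> + 1/\<gamma> * ln (1 - s)" by (simp add: lemma6_tplus_def s_def)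
  have dm: "lemma6_tminus \<gamma> = 3/2*\<gamma> + 1/\<gamma> * ln (1 + s)" by (simp add: lemma6_tminus_def s_def)
  have tp: "t < lemma6_tplus \<gamma> \<longleftrightarrow> y < 1 - s" "t > lemma6_tplus \<gamma> \<longleftrightarrow> y > 1 - s"
    unfolding dp y_def by (rule lt_iff[OF assms(1) p1(1)], rule gt_iff[OF assms(1) p1(1)])
  have tm: "t < lemma6_tminus \<gamma> \<longleftrightarrow> y < 1 + s" "t > lemma6_tminus \<gamma> \<longleftrightarrow> y > 1 + s"
    unfolding dm y_def by (rule lt_iff[OF assms(1) p1(2)], rule gt_iff[OF assms(1) p1(2)])
  show "t < lemma6_tplus \<gamma> \<or> t > lemma6_tminus \<gamma> \<Longrightarrow> lemma6_integrand \<gamma> \<zeta> t > 0"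
  proof -
    assume "t < lemma6_tplus \<gamma> \<or> t > lemma6_tminus \<gamma>"
    then have "(y - (1 - s)) * (y - (1 + s)) > 0" using tp tm b
      by (auto intro: mult_pos_pos mult_neg_neg)
    then show ?thesis using pos fac by (metis mult_pos_pos)
  qed
  show "t \<le> lemma6_tplus \<gamma> \<Longrightarrow> lemma6_integrand \<gamma> \<zeta> t \<ge> 0"
  proof -
    assume "t \<le> lemma6_tplus \<gamma>"
    then have "y \<le> 1 - s" using tp by (meson not_less)
    then have "(y - (1 - s)) * (y - (1 + s)) \<ge> 0" using b
      by (intro mult_nonpos_nonpos) auto
    then show ?thesis using pos fac by (metis mult_nonneg_nonneg less_imp_le)
  qed
  show "lemma6_tplus \<gamma> < t \<Longrightarrow> t < lemma6_tminus \<gamma> \<Longrightarrow> lemma6_integrand \<gamma> \<zeta> t < 0"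
  proof -
    assume "lemma6_tplus \<gamma> < t" "t < lemma6_tminus \<gamma>"
    then have "(y - (1 - s)) * (y - (1 + s)) < 0" using tp tm
      by (intro mult_pos_neg) auto
    then show ?thesis using pos fac by (metis mult_pos_neg)
  qed
qed


theorem lemma6:
  fixes \<gamma> \<zeta> :: real
  assumes "0 < \<gamma>" "\<gamma> \<le> 1" "0 < \<zeta>" "\<zeta> \<le> 1"
  shows "{t. \<forall>s. lemma6_f \<gamma> \<zeta> s \<le> lemma6_f \<gamma> \<zeta> t} = {lemma6_tplus \<gamma>, lemma6_tminus \<gamma>}
    \<and> lemma6_ftilde \<gamma> \<zeta> (lemma6_tplus \<gamma>) > 0
    \<and> lemma6_ftilde \<gamma> \<zeta> (lemma6_tminus \<gamma>) < 0"
proof -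
  let ?g = "lemma6_integrand \<gamma> \<zeta>"
  define k where "k = 1 / sqrt (2 * pi)"
  define FT where "FT = lemma6_ftilde \<gamma> \<zeta>"
  define tp where "tp = lemma6_tplus \<gamma>"
  define tm where "tm = lemma6_tminus \<gamma>"
  note b = basics[OF assms(1), folded tp_def tm_def]
  have k0: "k > 0" unfolding k_def by simp
  have FT_eq: "FT t = k * (LBINT x:{..t}. ?g x)" for t
    unfolding FT_def k_def lemma6_ftilde_def by simp
  have D: "DERIV FT t :> k * ?g t" for t
    unfolding FT_eq[abs_def] by (intro DERIV_cmult F_deriv)
  have C: "continuous_on A FT" for A
    using D by (meson DERIV_isCont continuous_at_imp_continuous_on)
  have Sym: "FT t + FT (2*\<gamma> - t) = 0" for t
    unfolding FT_eq using F_sym[of t \<gamma> \<zeta>] by (simp add: distrib_left[symmetric])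
  have inc: "FT a < FT c" if "a < c" "c \<le> tp" for a c
    using that
  proof (intro DERIV_pos_imp_increasing_open[OF that(1) _ C])
    fix x assume "a < x" "x < c"
    then have "?g x > 0" using g_sign(1)[OF assms(1,3)] that unfolding tp_def by auto
    then show "\<exists>y. DERIV FT x :> y \<and> y > 0" using D[of x] k0 by (intro exI[of _ "k * ?g x"]) simp
  qed
  have dec: "FT a > FT c" if "a < c" "tp \<le> a" "c \<le> tm" for a c
    using that
  proof (intro DERIV_neg_imp_decreasing_open[OF that(1) _ C])
    fix x assume "a < x" "x < c"
    then have "?g x < 0" using g_sign(3)[OF assms(1,3)] that unfolding tp_def tm_def by auto
    then show "\<exists>y. DERIV FT x :> y \<and> y < 0" using D k0 mult_pos_neg by blast
  qed
  have nn: "FT t \<ge> 0" if "t \<le> tp" for t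
  proof -
    have "0 \<le> (LBINT x:{..t}. ?g x)"
      unfolding set_lebesgue_integral_def
      using g_sign(2)[OF assms(1,3)] that unfolding tp_def
      by (intro Bochner_Integration.integral_nonneg) (auto split: split_indicator)
    then show ?thesis unfolding FT_eq using k0 by simp
  qed
  have tm_eq: "tm = 2*\<gamma> - tp" using b by simp
  have Ptp: "FT tp > 0" using inc[of "tp - 1" tp] nn[of "tp - 1"] by simp
  have Ptm: "FT tm = - FT tp" using Sym[of tp] tm_eq by simp
  have lt: "\<bar>FT t\<bar> < FT tp" if ne: "t \<noteq> tp" "t \<noteq> tm" for t
  proof -
    consider "t < tp" | "tp < t" "t < tm" | "tm < t" using ne b by linarith
    then show ?thesis
    proof cases
      case 1 then show ?thesis using inc[of t tp] nn[of t] by simp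
    next
      case 2 then show ?thesis using dec[of tp t] dec[of t tm] Ptm by simp
    next
      case 3
      then have "2*\<gamma> - t < tp" using tm_eq by simp
      then have "0 \<le> FT (2*\<gamma> - t)" "FT (2*\<gamma> - t) < FT tp" using inc[of "2*\<gamma> - t" tp] nn[of "2*\<gamma> - t"] by simp_all
      then show ?thesis using Sym[of t] by simp
    qed
  qed
  have f_eq: "lemma6_f \<gamma> \<zeta> t = \<bar>FT t\<bar>" for t unfolding lemma6_f_def FT_def by simp
  have "{t. \<forall>s. lemma6_f \<gamma> \<zeta> s \<le> lemma6_f \<gamma> \<zeta> t} = {tp, tm}"
  proof (intro set_eqI iffI)
    fix t assume "t \<in> {t. \<forall>s. lemma6_f \<gamma> \<zeta> s \<le> lemma6_f \<gamma> \<zeta> t}"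
    then have "\<bar>FT tp\<bar> \<le> \<bar>FT t\<bar>" unfolding f_eq by simp
    then show "t \<in> {tp, tm}" using lt[of t] Ptp by force
  next
    fix t assume "t \<in> {tp, tm}"
    then have "\<bar>FT t\<bar> = FT tp" using Ptp Ptm by auto
    moreover have "\<bar>FT s\<bar> \<le> FT tp" for s using lt[of s] Ptp Ptm by (cases "s = tp \<or> s = tm") auto
    ultimately show "t \<in> {t. \<forall>s. lemma6_f \<gamma> \<zeta> s \<le> lemma6_f \<gamma> \<zeta> t}" unfolding f_eq by simp
  qed
  then show ?thesis using Ptp Ptm unfolding tp_def tm_def FT_def by simp
qed

end
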